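(* Let $A$ be an $n\times n$ matrix over $\mathbb{C}$ (or $\mathbb{R}$) such that $A^3\neq 0$. Then the following are equivalent: (i) $A\otimes A^3\otimes A^2=A^2\otimes A^3\otimes A$; (ii) $A^2\otimes A=A\otimes A^2$; (iii) $A^2=\mu A$ for some scalar $\mu$.
   Context: Here $\otimes$ denotes the Kronecker product of matrices: for matrices $A=[a_{ij}]$ and $B$, $A\otimes B$ is the block matrix whose $(i,j)$ block is $a_{ij}B$. *)

theory Defs
  imports "Jordan_Normal_Form.Matrix"
begin

text \<open>Kronecker product: the block matrix whose (i,j) block is a_ij B.
  Row index i * dim_row B + k of the result lies in block row i, local row k.\<close>
definition kron :: "'a :: times mat \<Rightarrow> 'a mat \<Rightarrow> 'a mat" (infixl \<open>\<otimes>\<^sub>K\<close> 70) where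
  "kron A B = mat (dim_row A * dim_row B) (dim_col A * dim_col B)
     (\<lambda>(i, j). A $$ (i div dim_row B, j div dim_col B) * B $$ (i mod dim_row B, j mod dim_col B))"

end

theory Submission
  imports Defs
begin

lemma kron_carrier: "X \<in> carrier_mat p q \<Longrightarrow> Y \<in> carrier_mat r s \<Longrightarrow> kron X Y \<in> carrier_mat (p*r) (q*s)"
  by (simp add: kron_def)

lemma kron_idx: assumes "X \<in> carrier_mat p q" "Y \<in> carrier_mat r s" "i < p*r" "j < q*s"
  shows "kron X Y $$ (i,j) = X $$ (i div r, j div s) * Y $$ (i mod r, j mod s)"
  using assms by (simp add: kron_def)

lemma idx_lt: assumes "a < p" "c < (r::nat)" shows "a*r+c < p*r"
proof -
  have "a*r+c < (a+1)*r" using assms by simp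
  also have "(a+1)*r \<le> p*r" using assms by (intro mult_le_mono1) simp
  finally show ?thesis .
qed

lemma kron_idx2: assumes "X \<in> carrier_mat p q" "Y \<in> carrier_mat r s" "a < p" "b < q" "c < r" "d < s"
  shows "kron X Y $$ (a*r+c, b*s+d) = X $$ (a, b) * Y $$ (c, d)"
proof -
  have "a*r+c < p*r" "b*s+d < q*s" using assms by (simp_all add: idx_lt)
  then show ?thesis using assms by (simp add: kron_idx)
qed

lemma bnd: assumes "i < n*n*(n::nat)" shows "i div n < n*n" "i div n div n < n" "i div n mod n < n" "i mod n < n"
proof -
  have n: "n > 0" using assms by (cases n) auto
  show 1: "i div n < n*n" using assms by (simp add: less_mult_imp_div_less)
  show "i div n div n < n" using 1 by (simp add: less_mult_imp_div_less)
  show "i div n mod n < n" "i mod n < n" using n by auto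
qed

lemma bnd2: assumes "i < n*(n::nat)" shows "i div n < n" "i mod n < n"
proof -
  have n: "n > 0" using assms by (cases n) auto
  show "i div n < n" using assms by (simp add: less_mult_imp_div_less)
  show "i mod n < n" using n by auto
qed

theorem theorem2p3:
  fixes A :: "'a :: real_normed_field mat" and n :: nat
  assumes "A \<in> carrier_mat n n"
    and "A ^\<^sub>m 3 \<noteq> 0\<^sub>m n n"
  shows "(A \<otimes>\<^sub>K A ^\<^sub>m 3 \<otimes>\<^sub>K A ^\<^sub>m 2 = A ^\<^sub>m 2 \<otimes>\<^sub>K A ^\<^sub>m 3 \<otimes>\<^sub>K A
          \<longleftrightarrow> A ^\<^sub>m 2 \<otimes>\<^sub>K A = A \<otimes>\<^sub>K A ^\<^sub>m 2)
       \<and> (A ^\<^sub>m 2 \<otimes>\<^sub>K A = A \<otimes>\<^sub>K A ^\<^sub>m 2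
          \<longleftrightarrow> (\<exists>\<mu>. A ^\<^sub>m 2 = \<mu> \<cdot>\<^sub>m A))"
proof -
  have A: "A \<in> carrier_mat n n" by fact
  have A2: "A ^\<^sub>m 2 \<in> carrier_mat n n" and A3: "A ^\<^sub>m 3 \<in> carrier_mat n n" using A by auto
  have "\<exists>c d. c < n \<and> d < n \<and> (A ^\<^sub>m 3) $$ (c,d) \<noteq> 0"
  proof (rule ccontr)
    assume "\<not> ?thesis"
    then have "A ^\<^sub>m 3 = 0\<^sub>m n n" using A3 by (intro eq_matI) auto
    then show False using assms(2) by simp
  qed
  then obtain c d where cd: "c < n" "d < n" "(A ^\<^sub>m 3) $$ (c,d) \<noteq> 0" by blast
  have A3eq: "A ^\<^sub>m 3 = A ^\<^sub>m 2 * A"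
    by (simp add: numeral_3_eq_3 numeral_2_eq_2)
  have A2eq: "A ^\<^sub>m 2 = A * A"
    using A by (simp add: numeral_2_eq_2)
  have Anz: "\<exists>c d. c < n \<and> d < n \<and> A $$ (c,d) \<noteq> 0"
  proof (rule ccontr)
    assume "\<not> ?thesis"
    then have "A = 0\<^sub>m n n" using A by (intro eq_matI) auto
    then have "A ^\<^sub>m 3 = 0\<^sub>m n n" using A3eq A2 by simp
    then show False using assms(2) by simp
  qed
  define P1 where "P1 = (A \<otimes>\<^sub>K A ^\<^sub>m 3 \<otimes>\<^sub>K A ^\<^sub>m 2 = A ^\<^sub>m 2 \<otimes>\<^sub>K A ^\<^sub>m 3 \<otimes>\<^sub>K A)"
  define P2 where "P2 = (A ^\<^sub>m 2 \<otimes>\<^sub>K A = A \<otimes>\<^sub>K A ^\<^sub>m 2)"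
  define P3 where "P3 = (\<exists>\<mu>. A ^\<^sub>m 2 = \<mu> \<cdot>\<^sub>m A)"
  have 12: "P1 \<Longrightarrow> P2"
  proof -
    assume "P1"
    have E: "A $$ (a,b) * (A ^\<^sub>m 2) $$ (e,f) = (A ^\<^sub>m 2) $$ (a,b) * A $$ (e,f)"
      if "a < n" "b < n" "e < n" "f < n" for a b e f
    proof -
      have "(A \<otimes>\<^sub>K A ^\<^sub>m 3 \<otimes>\<^sub>K A ^\<^sub>m 2) $$ ((a*n+c)*n+e, (b*n+d)*n+f)
          = (A ^\<^sub>m 2 \<otimes>\<^sub>K A ^\<^sub>m 3 \<otimes>\<^sub>K A) $$ ((a*n+c)*n+e, (b*n+d)*n+f)"
        using \<open>P1\<close> P1_def by simp
      moreover have "a*n+c < n*n" "b*n+d < n*n"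
        using that cd by (simp_all add: idx_lt)
      moreover have "(A \<otimes>\<^sub>K A ^\<^sub>m 3) $$ (a*n+c, b*n+d) = A $$ (a,b) * (A ^\<^sub>m 3) $$ (c,d)"
        by (rule kron_idx2[OF A A3]) (use that cd in auto)
      moreover have "(A ^\<^sub>m 2 \<otimes>\<^sub>K A ^\<^sub>m 3) $$ (a*n+c, b*n+d) = (A ^\<^sub>m 2) $$ (a,b) * (A ^\<^sub>m 3) $$ (c,d)"
        by (rule kron_idx2[OF A2 A3]) (use that cd in auto)
      ultimately have "A $$ (a,b) * (A ^\<^sub>m 3) $$ (c,d) * (A ^\<^sub>m 2) $$ (e,f)
          = (A ^\<^sub>m 2) $$ (a,b) * (A ^\<^sub>m 3) $$ (c,d) * A $$ (e,f)"
        using that cd A A2 A3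
        by (simp add: kron_idx2[OF kron_carrier[OF A A3] A2] kron_idx2[OF kron_carrier[OF A2 A3] A])
      then have "(A ^\<^sub>m 3) $$ (c,d) * (A $$ (a,b) * (A ^\<^sub>m 2) $$ (e,f))
          = (A ^\<^sub>m 3) $$ (c,d) * ((A ^\<^sub>m 2) $$ (a,b) * A $$ (e,f))"
        by (simp add: ac_simps)
      then show ?thesis using cd(3) by simp
    qed
    show P2 unfolding P2_def
    proof (rule eq_matI)
      fix i j assume "i < dim_row (A \<otimes>\<^sub>K A ^\<^sub>m 2)" "j < dim_col (A \<otimes>\<^sub>K A ^\<^sub>m 2)"
      then have ij: "i < n*n" "j < n*n" using A by (auto simp: kron_def)
      show "(A ^\<^sub>m 2 \<otimes>\<^sub>K A) $$ (i,j) = (A \<otimes>\<^sub>K A ^\<^sub>m 2) $$ (i,j)"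
        using ij A E[of "i div n" "j div n" "i mod n" "j mod n"] bnd2[OF ij(1)] bnd2[OF ij(2)] by (simp add: kron_def)
    qed (use A in \<open>auto simp: kron_def\<close>)
  qed
  have 23: "P2 \<Longrightarrow> P3"
  proof -
    assume "P2"
    obtain c d where cd: "c < n" "d < n" "A $$ (c,d) \<noteq> 0" using Anz by blast
    have E: "(A ^\<^sub>m 2) $$ (a,b) * A $$ (c,d) = A $$ (a,b) * (A ^\<^sub>m 2) $$ (c,d)"
      if "a < n" "b < n" for a b
    proof -
      have "(A ^\<^sub>m 2 \<otimes>\<^sub>K A) $$ (a*n+c, b*n+d) = (A \<otimes>\<^sub>K A ^\<^sub>m 2) $$ (a*n+c, b*n+d)"
        using \<open>P2\<close> P2_def by simp
      then show ?thesis using that cd A A2 by (simp add: kron_idx2)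
    qed
    show P3 unfolding P3_def
    proof (intro exI eq_matI)
      fix i j assume "i < dim_row (((A ^\<^sub>m 2) $$ (c,d) / A $$ (c,d)) \<cdot>\<^sub>m A)"
        "j < dim_col (((A ^\<^sub>m 2) $$ (c,d) / A $$ (c,d)) \<cdot>\<^sub>m A)"
      then have ij: "i < n" "j < n" using A by auto
      show "(A ^\<^sub>m 2) $$ (i,j) = (((A ^\<^sub>m 2) $$ (c,d) / A $$ (c,d)) \<cdot>\<^sub>m A) $$ (i,j)"
        using E[OF ij] ij A cd(3) by (simp add: field_simps)
    qed (use A A2 in auto)
  qed
  have 31: "P3 \<Longrightarrow> P1 \<and> P2"
  proof -
    assume "P3"
    then obtain \<mu> where m: "A ^\<^sub>m 2 = \<mu> \<cdot>\<^sub>m A" unfolding P3_def by blast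
    have m3: "A ^\<^sub>m 3 = (\<mu>*\<mu>) \<cdot>\<^sub>m A"
    proof -
      have "A ^\<^sub>m 3 = (\<mu> \<cdot>\<^sub>m A) * A" using A3eq m by simp
      also have "\<dots> = \<mu> \<cdot>\<^sub>m (A * A)" using A by (simp add: mult_smult_assoc_mat)
      also have "\<dots> = \<mu> \<cdot>\<^sub>m (\<mu> \<cdot>\<^sub>m A)" using A2eq m by simp
      also have "\<dots> = (\<mu>*\<mu>) \<cdot>\<^sub>m A" by (rule eq_matI) auto
      finally show ?thesis .
    qed
    show ?thesis unfolding P1_def P2_def
    proof (intro conjI eq_matI)
      fix i j assume "i < dim_row (A ^\<^sub>m 2 \<otimes>\<^sub>K A ^\<^sub>m 3 \<otimes>\<^sub>K A)" "j < dim_col (A ^\<^sub>m 2 \<otimes>\<^sub>K A ^\<^sub>m 3 \<otimes>\<^sub>K A)"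
      then have ij: "i < n*n*n" "j < n*n*n" using A by (auto simp: kron_def)
      note b = ij bnd[OF ij(1)] bnd[OF ij(2)]
      show "(A \<otimes>\<^sub>K A ^\<^sub>m 3 \<otimes>\<^sub>K A ^\<^sub>m 2) $$ (i,j) = (A ^\<^sub>m 2 \<otimes>\<^sub>K A ^\<^sub>m 3 \<otimes>\<^sub>K A) $$ (i,j)"
        using b A unfolding m m3 by (simp add: kron_def ac_simps)
    next
      fix i j assume "i < dim_row (A \<otimes>\<^sub>K A ^\<^sub>m 2)" "j < dim_col (A \<otimes>\<^sub>K A ^\<^sub>m 2)"
      then have ij: "i < n*n" "j < n*n" using A by (auto simp: kron_def)
      then have "i div n < n" "j div n < n" "i mod n < n" "j mod n < n"
        using bnd2 by blast+
      then show "(A ^\<^sub>m 2 \<otimes>\<^sub>K A) $$ (i,j) = (A \<otimes>\<^sub>K A ^\<^sub>m 2) $$ (i,j)"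
        using A ij unfolding m by (simp add: kron_def ac_simps)
    qed (use A in \<open>auto simp: kron_def\<close>)
  qed
  show ?thesis using 12 23 31 unfolding P1_def[symmetric] P2_def[symmetric] P3_def[symmetric] by blast
qed

end
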